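(* Let $n\in\mathbb{N}$ and let $X_a,X_b,X_c\subset X$ be the subspaces defined below. Then for any constants $\beta\ge 0$ and $\gamma\ge0$, the spaces $X_a$, $X_b$, $X_c$ are pairwise orthogonal with respect to the inner product $$(\Delta u,\Delta v)_{L^2(0,1)}+\beta(\nabla u,\nabla v)_{L^2(0,1)}+\gamma(u,v)_{L^2(0,1)},\qquad u,v\in X.$$
   Context: Let $X=\{u\in H^2(0,1): u'(0)=u'(1)=0,\ \int_0^1u\,dx=0\}$, where $\Delta u=u''$ and $\nabla u=u'$. For $u\in X$ its extension $\tilde u$ is the $2$-periodic function with $\tilde u(x)=u(x)$ on $[0,1]$ and $\tilde u(x)=u(2-x)$ on $(1,2)$; it lies in $H^2_{per}(\mathbb{R})=\{v\in H^2_{loc}(\mathbb{R}): v(x+2)=v(x)\ \forall x,\ \int_0^2v\,dx=0\}$. On $W=H^2_{per}(\mathbb{R})$ define $(T_nv)(x)=-v(x+1/n)$ and $W_a=N(T_n-I)$, $W_b=N(T_n^{n-1}+\dots+T_n+I)$, $W_c=N(T_n^n+I)$. Define $X_\tau=\{u\in X:\tilde u\in W_\tau\}$ for $\tau\in\{a,b,c\}$. *)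

theory Defs
  imports "HOL-Analysis.Analysis"
begin

definition L2_on :: "(real \<Rightarrow> real) \<Rightarrow> real set \<Rightarrow> bool" where
  "L2_on f S \<longleftrightarrow> f measurable_on S \<and> (\<lambda>x. (f x)^2) integrable_on S"

text \<open>H^2(0,1), represented by the (absolutely continuous) representative u together with
  its first and second (weak) derivatives u1 = u' and u2 = u'':
  u2 is in L^2(0,1), u1 is an indefinite integral of u2 and u is an indefinite integral of u1.\<close>
definition H2_01 :: "(real \<Rightarrow> real) \<Rightarrow> (real \<Rightarrow> real) \<Rightarrow> (real \<Rightarrow> real) \<Rightarrow> bool" where
  "H2_01 u u1 u2 \<longleftrightarrow> L2_on u2 {0..1}
     \<and> (\<forall>x\<in>{0..1}. u1 x = u1 0 + integral {0..x} u2)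
     \<and> (\<forall>x\<in>{0..1}. u x = u 0 + integral {0..x} u1)"

definition in_X :: "(real \<Rightarrow> real) \<Rightarrow> (real \<Rightarrow> real) \<Rightarrow> (real \<Rightarrow> real) \<Rightarrow> bool" where
  "in_X u u1 u2 \<longleftrightarrow> H2_01 u u1 u2 \<and> u1 0 = 0 \<and> u1 1 = 0 \<and> integral {0..1} u = 0"

text \<open>Even 2-periodic extension: u on [0,1], u(2-x) on (1,2), extended 2-periodically.\<close>
definition ext :: "(real \<Rightarrow> real) \<Rightarrow> real \<Rightarrow> real" where
  "ext u x = (let y = x - 2 * of_int \<lfloor>x / 2\<rfloor> in if y \<le> 1 then u y else u (2 - y))"

definition T :: "nat \<Rightarrow> (real \<Rightarrow> real) \<Rightarrow> (real \<Rightarrow> real)" where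
  "T n v = (\<lambda>x. - v (x + 1 / real n))"

definition W_a :: "nat \<Rightarrow> (real \<Rightarrow> real) \<Rightarrow> bool" where
  "W_a n v \<longleftrightarrow> (\<forall>x. T n v x - v x = 0)"

definition W_b :: "nat \<Rightarrow> (real \<Rightarrow> real) \<Rightarrow> bool" where
  "W_b n v \<longleftrightarrow> (\<forall>x. (\<Sum>k<n. (T n ^^ k) v x) = 0)"

definition W_c :: "nat \<Rightarrow> (real \<Rightarrow> real) \<Rightarrow> bool" where
  "W_c n v \<longleftrightarrow> (\<forall>x. (T n ^^ n) v x + v x = 0)"

datatype sym = Sa | Sb | Sc

definition W_sym :: "sym \<Rightarrow> nat \<Rightarrow> (real \<Rightarrow> real) \<Rightarrow> bool" where
  "W_sym \<tau> n v = (case \<tau> of Sa \<Rightarrow> W_a n v | Sb \<Rightarrow> W_b n v | Sc \<Rightarrow> W_c n v)"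

definition in_X_sym :: "sym \<Rightarrow> nat \<Rightarrow> (real \<Rightarrow> real) \<Rightarrow> (real \<Rightarrow> real) \<Rightarrow> (real \<Rightarrow> real) \<Rightarrow> bool" where
  "in_X_sym \<tau> n u u1 u2 \<longleftrightarrow> in_X u u1 u2 \<and> W_sym \<tau> n (ext u)"

definition ip :: "real \<Rightarrow> real \<Rightarrow> (real \<Rightarrow> real) \<Rightarrow> (real \<Rightarrow> real) \<Rightarrow> (real \<Rightarrow> real)
                   \<Rightarrow> (real \<Rightarrow> real) \<Rightarrow> (real \<Rightarrow> real) \<Rightarrow> (real \<Rightarrow> real) \<Rightarrow> real" where
  "ip \<beta> \<gamma> u u1 u2 v v1 v2 =
     integral {0..1} (\<lambda>x. u2 x * v2 x) + \<beta> * integral {0..1} (\<lambda>x. u1 x * v1 x)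
     + \<gamma> * integral {0..1} (\<lambda>x. u x * v x)"

end

theory Submission
  imports Defs
begin


lemma Zlemma:
  fixes f :: "real \<Rightarrow> real"
  assumes f: "f absolutely_integrable_on {p..q}"
    and z: "\<And>t. t \<in> {p..q} \<Longrightarrow> integral {p..t} f = 0"
  shows "\<exists>N. negligible N \<and> (\<forall>x\<in>{p..q} - N. f x = 0)"
proof -
  define F where "F x = indicator {p..q} x * f x" for x
  have Fint: "integrable lebesgue F"
    using f unfolding set_integrable_def F_def by simp
  have Fmeas: "F \<in> borel_measurable lebesgue"
    using Fint by auto
  have fint: "f integrable_on {p..q}" using f set_lebesgue_integral_eq_integral(1) by blast
  have iv: "integral\<^sup>L lebesgue (\<lambda>x. F x * indicator {a<..} x) = 0" for a
  proof -
    have si: "set_integrable lebesgue ({a<..} \<inter> {p..q}) f"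
      by (rule set_integrable_subset[OF f]) auto
    have "integral\<^sup>L lebesgue (\<lambda>x. F x * indicator {a<..} x) = (LINT x:({a<..} \<inter> {p..q}) | lebesgue. f x)"
      unfolding set_lebesgue_integral_def F_def
      by (intro Bochner_Integration.integral_cong) (auto simp: indicator_def)
    also have "\<dots> = integral ({a<..} \<inter> {p..q}) f"
      using set_lebesgue_integral_eq_integral(2)[OF si] .
    also have "\<dots> = 0"
    proof (cases "a < p")
      case True
      then have "{a<..} \<inter> {p..q} = {p..q}" by auto
      then show ?thesis using z[of q] by (cases "p \<le> q") auto
    next
      case False
      show ?thesis
      proof (cases "a < q")
        case True
        have "integral ({a<..} \<inter> {p..q}) f = integral {a..q} f"
          by (rule integral_spike_set; rule negligible_subset[of "{a}"]) (use False in auto)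
        also have "\<dots> = integral {p..q} f - integral {p..a} f"
          using Henstock_Kurzweil_Integration.integral_combine[where a=p and c=a and b=q and f=f] fint False True by auto
        also have "\<dots> = 0" using z[of q] z[of a] False True by auto
        finally show ?thesis .
      next
        case False
        then have "{a<..} \<inter> {p..q} = {}" by auto
        then show ?thesis by simp
      qed
    qed
    finally show ?thesis .
  qed
  obtain G where Gb: "G \<in> borel_measurable lborel" and FG: "AE x in lborel. F x = G x"
    using completion_ex_borel_measurable_real[OF Fmeas] by blast
  have FGc: "AE x in lebesgue. F x = G x" using AE_completion[OF FG] .
  have Gb'[measurable]: "G \<in> borel_measurable lebesgue" using Gb measurable_completion by blast
  note Fmeas[measurable]
  have Gint: "integrable lborel G"
  proof -
    have "integrable lebesgue G" using Fint FGc Gb' Fmeas integrable_cong_AE by blast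
    then show ?thesis using integrable_completion Gb by blast
  qed
  have Giv: "integral\<^sup>L lborel (\<lambda>x. G x * indicator {a<..} x) = 0" for a
  proof -
    have "integral\<^sup>L lborel (\<lambda>x. G x * indicator {a<..} x) = integral\<^sup>L lebesgue (\<lambda>x. G x * indicator {a<..} x)"
      by (rule integral_completion[symmetric]) (use Gb in simp)
    also have "\<dots> = integral\<^sup>L lebesgue (\<lambda>x. F x * indicator {a<..} x)"
    proof (rule integral_cong_AE)
      have "{a<..} \<in> sets lebesgue" by simp
      then show "(\<lambda>x. G x * indicator {a<..} x) \<in> borel_measurable lebesgue"
        "(\<lambda>x. F x * indicator {a<..} x) \<in> borel_measurable lebesgue"
        by (intro borel_measurable_times Gb' Fmeas borel_measurable_indicator; assumption)+
      show "AE x in lebesgue. G x * indicator {a<..} x = F x * indicator {a<..} x"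
        using FGc by eventually_elim simp
    qed
    finally show ?thesis using iv by simp
  qed
  define Gp where "Gp x = max 0 (G x)" for x
  define Gm where "Gm x = max 0 (- G x)" for x
  have [measurable]: "Gp \<in> borel_measurable lborel" "Gm \<in> borel_measurable lborel"
    using Gb unfolding Gp_def Gm_def by auto
  have Gpi: "integrable lborel (\<lambda>x. Gp x * indicator {a<..} x)" for a
    by (rule Bochner_Integration.integrable_bound[OF Gint], measurable) (auto simp: Gp_def indicator_def)
  have Gmi: "integrable lborel (\<lambda>x. Gm x * indicator {a<..} x)" for a
    by (rule Bochner_Integration.integrable_bound[OF Gint], measurable) (auto simp: Gm_def indicator_def)
  have eqv: "(\<integral>\<^sup>+ x. ennreal (Gp x) * indicator {a<..} x \<partial>lborel) = (\<integral>\<^sup>+ x. ennreal (Gm x) * indicator {a<..} x \<partial>lborel)"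
    and fin: "(\<integral>\<^sup>+ x. ennreal (Gp x) * indicator {a<..} x \<partial>lborel) < \<infinity>" for a
  proof -
    have e1: "(\<integral>\<^sup>+ x. ennreal (Gp x) * indicator {a<..} x \<partial>lborel) = ennreal (integral\<^sup>L lborel (\<lambda>x. Gp x * indicator {a<..} x))"
      using nn_integral_eq_integral[OF Gpi] by (simp add: Gp_def indicator_mult_ennreal mult.commute)
    have e2: "(\<integral>\<^sup>+ x. ennreal (Gm x) * indicator {a<..} x \<partial>lborel) = ennreal (integral\<^sup>L lborel (\<lambda>x. Gm x * indicator {a<..} x))"
      using nn_integral_eq_integral[OF Gmi] by (simp add: Gm_def indicator_mult_ennreal mult.commute)
    have "integral\<^sup>L lborel (\<lambda>x. Gp x * indicator {a<..} x) - integral\<^sup>L lborel (\<lambda>x. Gm x * indicator {a<..} x)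
        = integral\<^sup>L lborel (\<lambda>x. G x * indicator {a<..} x)"
      unfolding Bochner_Integration.integral_diff[OF Gpi Gmi, symmetric]
      by (rule Bochner_Integration.integral_cong) (auto simp: Gp_def Gm_def indicator_def)
    then show "(\<integral>\<^sup>+ x. ennreal (Gp x) * indicator {a<..} x \<partial>lborel) = (\<integral>\<^sup>+ x. ennreal (Gm x) * indicator {a<..} x \<partial>lborel)"
      using Giv e1 e2 by simp
    show "(\<integral>\<^sup>+ x. ennreal (Gp x) * indicator {a<..} x \<partial>lborel) < \<infinity>" using e1 by simp
  qed
  have MM: "density lborel (\<lambda>x. ennreal (Gp x)) = density lborel (\<lambda>x. ennreal (Gm x))"
  proof (rule measure_eqI_lessThan)
    fix a :: real
    show "emeasure (density lborel (\<lambda>x. ennreal (Gp x))) {a<..} < \<infinity>"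
      using fin[of a] by (simp add: emeasure_density)
    show "emeasure (density lborel (\<lambda>x. ennreal (Gp x))) {a<..} = emeasure (density lborel (\<lambda>x. ennreal (Gm x))) {a<..}"
      using eqv[of a] by (simp add: emeasure_density)
  qed auto
  have "AE x in lborel. ennreal (Gp x) = ennreal (Gm x)"
  proof (rule sigma_finite_measure.density_unique2)
    show "sigma_finite_measure lborel" by (rule sigma_finite_lborel)
    fix A :: "real set" assume "A \<in> sets lborel"
    then show "set_nn_integral lborel A (\<lambda>x. ennreal (Gp x)) = set_nn_integral lborel A (\<lambda>x. ennreal (Gm x))"
      using arg_cong[OF MM, of "\<lambda>M. emeasure M A"] by (simp add: emeasure_density mult.commute)
  qed auto
  then have "AE x in lborel. G x = 0"
    by eventually_elim (auto simp: Gp_def Gm_def max_def split: if_splits)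
  then have "AE x in lborel. F x = 0" using FG by eventually_elim simp
  then have "AE x in lebesgue. F x = 0" by (rule AE_completion)
  then obtain N where N2: "{x \<in> space lebesgue. \<not> F x = 0} \<subseteq> N" and N1: "N \<in> null_sets lebesgue"
    by (rule AE_E) (auto simp: null_sets_def)
  note N = N1 N2
  show ?thesis
  proof (intro exI conjI ballI)
    show "negligible N" using N(1) negligible_iff_null_sets by blast
    fix x assume "x \<in> {p..q} - N"
    then have "F x = 0" using N(2) by auto
    then show "f x = 0" using \<open>x \<in> {p..q} - N\<close> by (simp add: F_def)
  qed
qed


lemma ivl_has_integral:
  fixes w w' :: "real \<Rightarrow> real"
  assumes rep: "\<forall>x\<in>{0..1}. w x = w 0 + integral {0..x} w'" and wi: "w' integrable_on {0..1}"
    and ab: "0 \<le> a" "a \<le> b" "b \<le> 1"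
  shows "(w' has_integral (w b - w a)) {a..b}"
proof -
  have ib: "w' integrable_on {0..b}" using ab by (intro integrable_on_subinterval[OF wi]) auto
  have c: "integral {0..a} w' + integral {a..b} w' = integral {0..b} w'"
    using Henstock_Kurzweil_Integration.integral_combine[where a=0 and c=a and b=b and f=w'] ab ib by auto
  have e: "w a = w 0 + integral {0..a} w'" "w b = w 0 + integral {0..b} w'"
    using rep ab by (meson atLeastAtMost_iff order_trans)+
  have "w b - w a = integral {a..b} w'" using c e by linarith
  moreover have "w' integrable_on {a..b}" using ab by (intro integrable_on_subinterval[OF wi]) auto
  ultimately show ?thesis using has_integral_integral by metis
qed
lemma affine_integrable:
  fixes g :: "real \<Rightarrow> real"
  assumes gi: "g integrable_on {0..1}" and s: "s = 1 \<or> s = -1"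
    and rng: "\<forall>x\<in>{p..t}. s*x + d \<in> {0..1}" and pt: "p \<le> t"
  shows "(\<lambda>x. g (s*x+d)) integrable_on {p..t}"
proof (cases "s = 1")
  case True
  have "g integrable_on {p+d..t+d}" using gi rng pt True
    by (intro integrable_on_subinterval[OF gi]) (use rng[rule_format, of p] rng[rule_format, of t] pt in auto)
  then have "(\<lambda>x. g (x + d)) integrable_on {p+d-d..t+d-d}"
    using integrable_shift_cbox[of g "p+d" "t+d" d] by simp
  then show ?thesis using True by (simp add: add.commute)
next
  case False
  then have s': "s = -1" using s by simp
  have "g integrable_on {d-t..d-p}" using gi rng pt s'
    by (intro integrable_on_subinterval[OF gi]) (use rng[rule_format, of p] rng[rule_format, of t] pt in auto)
  then have "(\<lambda>x. g (x + d)) integrable_on {d-t-d..d-p-d}"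
    using integrable_shift_cbox[of g "d-t" "d-p" d] by simp
  then have "(\<lambda>x. g (x + d)) integrable_on {-t..-p}" by simp
  then have "(\<lambda>x. g (-x + d)) integrable_on {-(-p)..-(-t)}"
    using Henstock_Kurzweil_Integration.integrable_reflect_real[where f="\<lambda>x. g (x + d)" and a="-t" and b="-p"] by simp
  then show ?thesis using s' by simp
qed

lemma affine_abs_integrable:
  fixes g :: "real \<Rightarrow> real"
  assumes gi: "g absolutely_integrable_on {0..1}" and s: "s = 1 \<or> s = -1"
    and rng: "\<forall>x\<in>{p..t}. s*x + d \<in> {0..1}" and pt: "p \<le> t"
  shows "(\<lambda>x. g (s*x+d)) absolutely_integrable_on {p..t}"
proof -
  have "g integrable_on {0..1}" "(\<lambda>x. norm (g x)) integrable_on {0..1}"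
    using gi absolutely_integrable_on_def by blast+
  from affine_integrable[OF this(1) s rng pt] affine_integrable[OF this(2) s rng pt]
  show ?thesis unfolding absolutely_integrable_on_def by simp
qed

lemma step_term:
  fixes w w' :: "real \<Rightarrow> real"
  assumes rep: "\<forall>x\<in>{0..1}. w x = w 0 + integral {0..x} w'" and wi: "w' integrable_on {0..1}"
    and s: "s = 1 \<or> s = -1" and rng: "\<forall>x\<in>{p..t}. s*x + d \<in> {0..1}" and pt: "p \<le> t"
  shows "((\<lambda>x. s * w' (s*x+d)) has_integral (w (s*t+d) - w (s*p+d))) {p..t}"
proof (cases "s = 1")
  case True
  have "(w' has_integral (w (t+d) - w (p+d))) {p+d..t+d}" using rng pt True
    by (intro ivl_has_integral[OF rep wi]) (use rng[rule_format, of p] rng[rule_format, of t] pt in auto)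
  then have "((\<lambda>x. w' (x + d)) has_integral (w (t+d) - w (p+d))) {p+d-d..t+d-d}"
    using has_integral_shift_cbox[of w' _ "p+d" "t+d" d] by simp
  then show ?thesis using True by (simp add: add.commute)
next
  case False
  then have s': "s = -1" using s by simp
  have "(w' has_integral (w (d-p) - w (d-t))) {d-t..d-p}" using rng pt s'
    by (intro ivl_has_integral[OF rep wi]) (use rng[rule_format, of p] rng[rule_format, of t] pt in auto)
  then have "((\<lambda>x. w' (x + d)) has_integral (w (d-p) - w (d-t))) {d-t-d..d-p-d}"
    using has_integral_shift_cbox[of w' _ "d-t" "d-p" d] by simp
  then have "((\<lambda>x. w' (x + d)) has_integral (w (d-p) - w (d-t))) {-t..-p}" by simp
  then have "((\<lambda>x. w' (-x + d)) has_integral (w (d-p) - w (d-t))) {-(-p)..-(-t)}"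
    using Henstock_Kurzweil_Integration.has_integral_reflect_real[where f="\<lambda>x. w' (x + d)" and a="-t" and b="-p"] by simp
  then have "((\<lambda>x. w' (-x + d)) has_integral (w (d-p) - w (d-t))) {p..t}" by simp
  from has_integral_neg[OF this]
  have "((\<lambda>x. - w' (-x + d)) has_integral - (w (d-p) - w (d-t))) {p..t}" by simp
  then show ?thesis using s' by simp
qed



lemma rel_step:
  fixes w w' :: "real \<Rightarrow> real" and c s d :: "'j \<Rightarrow> real"
  assumes rep: "\<forall>x\<in>{0..1}. w x = w 0 + integral {0..x} w'" and wi: "w' integrable_on {0..1}"
    and J: "finite J" and s: "\<forall>j\<in>J. s j = 1 \<or> s j = -1"
    and rng: "\<forall>j\<in>J. \<forall>x\<in>{p..q}. s j * x + d j \<in> {0..1}"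
    and rel: "\<forall>x\<in>{p..q}. (\<Sum>j\<in>J. c j * w (s j * x + d j)) = 0"
    and t: "t \<in> {p..q}"
  shows "((\<lambda>x. \<Sum>j\<in>J. c j * s j * w' (s j * x + d j)) has_integral 0) {p..t}"
proof -
  have "((\<lambda>x. \<Sum>j\<in>J. c j * (s j * w' (s j * x + d j))) has_integral
        (\<Sum>j\<in>J. c j * (w (s j * t + d j) - w (s j * p + d j)))) {p..t}"
  proof (rule has_integral_sum[OF J])
    fix j assume j: "j \<in> J"
    have "((\<lambda>x. s j * w' (s j * x + d j)) has_integral (w (s j * t + d j) - w (s j * p + d j))) {p..t}"
      using step_term[OF rep wi, of "s j" p t "d j"] s j rng t by auto
    then show "((\<lambda>x. c j * (s j * w' (s j * x + d j))) has_integral c j * (w (s j * t + d j) - w (s j * p + d j))) {p..t}"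
      by (rule has_integral_mult_right)
  qed
  moreover have "(\<Sum>j\<in>J. c j * (w (s j * t + d j) - w (s j * p + d j))) =
      (\<Sum>j\<in>J. c j * w (s j * t + d j)) - (\<Sum>j\<in>J. c j * w (s j * p + d j))"
    by (simp add: right_diff_distrib sum_subtractf)
  moreover have "(\<Sum>j\<in>J. c j * w (s j * t + d j)) = 0" using rel t by blast
  moreover have "(\<Sum>j\<in>J. c j * w (s j * p + d j)) = 0" using rel t by auto
  ultimately show ?thesis by (simp add: mult.assoc)
qed

lemma rel_cont:
  fixes w w' :: "real \<Rightarrow> real" and c s d :: "'j \<Rightarrow> real"
  assumes rep: "\<forall>x\<in>{0..1}. w x = w 0 + integral {0..x} w'" and wc: "continuous_on {0..1} w'"
    and J: "finite J" and s: "\<forall>j\<in>J. s j = 1 \<or> s j = -1"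
    and rng: "\<forall>j\<in>J. \<forall>x\<in>{p..q}. s j * x + d j \<in> {0..1}"
    and rel: "\<forall>x\<in>{p..q}. (\<Sum>j\<in>J. c j * w (s j * x + d j)) = 0"
    and pq: "p < q"
  shows "\<forall>x\<in>{p..q}. (\<Sum>j\<in>J. c j * s j * w' (s j * x + d j)) = 0"
proof
  fix x assume x: "x \<in> {p..q}"
  define g where "g y = (\<Sum>j\<in>J. c j * s j * w' (s j * y + d j))" for y
  have wi: "w' integrable_on {0..1}" using wc integrable_continuous_real by blast
  have gc: "continuous_on {p..q} g" unfolding g_def
  proof (intro continuous_on_sum continuous_on_mult continuous_on_const)
    fix j assume j: "j \<in> J"
    show "continuous_on {p..q} (\<lambda>y. w' (s j * y + d j))"
      by (rule continuous_on_compose2[OF wc]) (use rng j in \<open>auto intro!: continuous_intros\<close>)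
  qed
  have z: "integral {p..y} g = 0" if "y \<in> {p..q}" for y
    using rel_step[OF rep wi J s rng rel that] unfolding g_def by (simp add: integral_unique)
  have d1: "((\<lambda>y. integral {p..y} g) has_real_derivative g x) (at x within {p..q})"
    by (rule integral_has_real_derivative[OF gc x])
  have d2: "((\<lambda>y. integral {p..y} g) has_real_derivative 0) (at x within {p..q})"
    by (rule has_field_derivative_transform_within[where f="\<lambda>_. 0" and d=1])
       (use x z in auto)
  have "g x = 0"
    using vector_derivative_unique_within_closed_interval[of p q x "\<lambda>y. integral {p..y} g" "g x" 0]
      d1 d2 pq x by (simp add: has_real_derivative_iff_has_vector_derivative)
  then show "(\<Sum>j\<in>J. c j * s j * w' (s j * x + d j)) = 0" unfolding g_def .
qed

lemma rel_ae:
  fixes w w' :: "real \<Rightarrow> real" and c s d :: "'j \<Rightarrow> real"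
  assumes rep: "\<forall>x\<in>{0..1}. w x = w 0 + integral {0..x} w'" and wa: "w' absolutely_integrable_on {0..1}"
    and J: "finite J" and s: "\<forall>j\<in>J. s j = 1 \<or> s j = -1"
    and rng: "\<forall>j\<in>J. \<forall>x\<in>{p..q}. s j * x + d j \<in> {0..1}"
    and rel: "\<forall>x\<in>{p..q}. (\<Sum>j\<in>J. c j * w (s j * x + d j)) = 0"
    and pq: "p \<le> q"
  shows "\<exists>N. negligible N \<and> (\<forall>x\<in>{p..q} - N. (\<Sum>j\<in>J. c j * s j * w' (s j * x + d j)) = 0)"
proof (rule Zlemma)
  have wi: "w' integrable_on {0..1}" using wa absolutely_integrable_on_def by blast
  show "(\<lambda>x. \<Sum>j\<in>J. c j * s j * w' (s j * x + d j)) absolutely_integrable_on {p..q}"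
  proof (rule absolutely_integrable_sum[OF J])
    fix j assume j: "j \<in> J"
    have "(\<lambda>x. w' (s j * x + d j)) absolutely_integrable_on {p..q}"
      by (rule affine_abs_integrable[OF wa]) (use s rng j pq in auto)
    from absolutely_integrable_scaleR_left[OF this, of "c j * s j"]
    show "(\<lambda>x. c j * s j * w' (s j * x + d j)) absolutely_integrable_on {p..q}" by simp
  qed
  fix t assume "t \<in> {p..q}"
  then show "integral {p..t} (\<lambda>x. \<Sum>j\<in>J. c j * s j * w' (s j * x + d j)) = 0"
    using rel_step[OF rep wi J s rng rel] by (simp add: integral_unique)
qed



lemma integral_refl01: "integral {0..1} (\<lambda>x. h (1 - x)) = integral {0..1::real} h"
proof -
  have "integral {0..1} (\<lambda>x. h (1 - x)) = integral {0..1} ((\<lambda>y. h (-y)) \<circ> (+) (-1))"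
    by (simp add: o_def)
  also have "\<dots> = integral {0 + -1..1 + -1} (\<lambda>y. h (-y))"
    by (rule integral_shift_Icc_real)
  also have "\<dots> = integral {-1..-0} (\<lambda>y. h (-y))" by simp
  also have "\<dots> = integral {0..1} h"
    by (rule Henstock_Kurzweil_Integration.integral_reflect_real)
  finally show ?thesis .
qed

lemma orth_refl:
  fixes f g :: "real \<Rightarrow> real"
  assumes N: "negligible N" and e: "e * e = 1"
    and rf: "\<forall>x\<in>{0..1} - N. f (1 - x) = e * f x"
    and rg: "\<forall>x\<in>{0..1} - N. g (1 - x) = - e * g x"
  shows "integral {0..1} (\<lambda>x. f x * g x) = 0"
proof -
  let ?I = "integral {0..1} (\<lambda>x. f x * g x)"
  have "?I = integral {0..1} (\<lambda>x. f (1 - x) * g (1 - x))"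
    using integral_refl01[of "\<lambda>x. f x * g x"] by simp
  also have "\<dots> = integral {0..1} (\<lambda>x. - (f x * g x))"
  proof (rule integral_spike[OF N])
    fix x assume "x \<in> {0..1} - N"
    then have "f (1 - x) * g (1 - x) = - ((e * e) * (f x * g x))" using rf rg by (simp add: algebra_simps)
    then show "- (f x * g x) = f (1 - x) * g (1 - x)" using e by simp
  qed
  also have "\<dots> = - ?I" by simp
  finally show ?thesis by simp
qed

lemma orth_shift:
  fixes f g :: "real \<Rightarrow> real" and n :: nat
  assumes n: "n \<ge> 1" and N: "negligible N"
    and rf: "\<forall>t\<in>{0..1/real n} - N. \<forall>j<n. f (t + real j / real n) = (-1)^j * f t"
    and rg: "\<forall>t\<in>{0..1/real n} - N. (\<Sum>j<n. (-1)^j * g (t + real j / real n)) = 0"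
  shows "integral {0..1} (\<lambda>x. f x * g x) = 0"
proof (cases "(\<lambda>x. f x * g x) integrable_on {0..1}")
  case False
  then show ?thesis by (rule not_integrable_integral)
next
  case True
  define P where "P x = f x * g x" for x
  have Pi: "P integrable_on {0..1}" using True unfolding P_def .
  have npos: "real n > 0" using n by simp
  have sub: "integral {0..real k / real n} P = (\<Sum>j<k. integral {real j / real n .. real (Suc j) / real n} P)"
    if "k \<le> n" for k
    using that
  proof (induction k)
    case 0
    then show ?case by simp
  next
    case (Suc k)
    have le1: "real (Suc k) / real n \<le> 1" using Suc.prems npos by (simp add: divide_le_eq_1)
    have i: "P integrable_on {0..real (Suc k) / real n}"
      by (rule integrable_on_subinterval[OF Pi]) (use le1 in auto)
    have "integral {0..real k / real n} P + integral {real k / real n..real (Suc k) / real n} P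
        = integral {0..real (Suc k) / real n} P"
      by (rule Henstock_Kurzweil_Integration.integral_combine[OF _ _ i]) (use npos in \<open>auto simp: divide_right_mono\<close>)
    then show ?case using Suc by simp
  qed
  have piece: "integral {real j / real n .. real (Suc j) / real n} P =
      integral {0..1/real n} (\<lambda>t. (-1)^j * (f t * g (t + real j / real n)))"
    and pint: "(\<lambda>t. (-1)^j * (f t * g (t + real j / real n))) integrable_on {0..1/real n}"
    if j: "j < n" for j
  proof -
    have e1: "real (Suc j) / real n = 1 / real n + real j / real n" by (simp add: add_divide_distrib)
    have le1: "real (Suc j) / real n \<le> 1" using j npos by (simp add: divide_le_eq_1)
    have "integral {real j / real n .. real (Suc j) / real n} P = integral {0 + real j / real n .. 1 / real n + real j / real n} P"
      using e1 by simp
    also have "\<dots> = integral {0..1/real n} (P \<circ> (+) (real j / real n))"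
      by (rule integral_shift_Icc_real[symmetric])
    also have "\<dots> = integral {0..1/real n} (\<lambda>t. (-1)^j * (f t * g (t + real j / real n)))"
    proof (rule integral_spike[OF N])
      fix t assume t: "t \<in> {0..1/real n} - N"
      then show "(-1)^j * (f t * g (t + real j / real n)) = (P \<circ> (+) (real j / real n)) t"
        using rf j by (simp add: P_def add.commute)
    qed
    finally show "integral {real j / real n .. real (Suc j) / real n} P =
      integral {0..1/real n} (\<lambda>t. (-1)^j * (f t * g (t + real j / real n)))" .
    have "P integrable_on {real j / real n .. real (Suc j) / real n}"
      by (rule integrable_on_subinterval[OF Pi]) (use le1 in auto)
    then have "(\<lambda>t. P (t + real j / real n)) integrable_on {real j / real n - real j / real n .. real (Suc j) / real n - real j / real n}"
      using integrable_shift_cbox[of P "real j / real n" "real (Suc j) / real n" "real j / real n"] by simp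
    then have "(\<lambda>t. P (t + real j / real n)) integrable_on {0..1/real n}" using e1 by simp
    then show "(\<lambda>t. (-1)^j * (f t * g (t + real j / real n))) integrable_on {0..1/real n}"
    proof (rule integrable_spike[OF _ N])
      fix t assume t: "t \<in> {0..1/real n} - N"
      then show "(-1)^j * (f t * g (t + real j / real n)) = P (t + real j / real n)"
        using rf j by (simp add: P_def)
    qed
  qed
  have "integral {0..1} (\<lambda>x. f x * g x) = integral {0..real n / real n} P"
    using npos unfolding P_def by simp
  also have "\<dots> = (\<Sum>j<n. integral {0..1/real n} (\<lambda>t. (-1)^j * (f t * g (t + real j / real n))))"
    using sub[of n] piece by simp
  also have "\<dots> = integral {0..1/real n} (\<lambda>t. \<Sum>j<n. (-1)^j * (f t * g (t + real j / real n)))"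
    by (rule integral_sum[symmetric]) (use pint in auto)
  also have "\<dots> = integral {0..1/real n} (\<lambda>t. 0)"
  proof (rule integral_spike[OF N])
    fix t assume t: "t \<in> {0..1/real n} - N"
    have "(\<Sum>j<n. (-1)^j * (f t * g (t + real j / real n))) = f t * (\<Sum>j<n. (-1)^j * g (t + real j / real n))"
      by (simp add: sum_distrib_left algebra_simps)
    then show "0 = (\<Sum>j<n. (-1)^j * (f t * g (t + real j / real n)))" using rg t by simp
  qed
  finally show ?thesis by simp
qed



lemma X_facts:
  assumes "in_X u u1 u2"
  shows "\<forall>x\<in>{0..1}. u x = u 0 + integral {0..x} u1"
    and "\<forall>x\<in>{0..1}. u1 x = u1 0 + integral {0..x} u2"
    and "u2 absolutely_integrable_on {0..1}"
    and "continuous_on {0..1} u1"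
proof -
  have H: "L2_on u2 {0..1}" "\<forall>x\<in>{0..1}. u1 x = u1 0 + integral {0..x} u2"
    "\<forall>x\<in>{0..1}. u x = u 0 + integral {0..x} u1"
    using assms unfolding in_X_def H2_01_def by blast+
  show "\<forall>x\<in>{0..1}. u x = u 0 + integral {0..x} u1" by (rule H(3))
  show "\<forall>x\<in>{0..1}. u1 x = u1 0 + integral {0..x} u2" by (rule H(2))
  have m: "u2 measurable_on {0..1}" and sq: "(\<lambda>x. (u2 x)^2) integrable_on {0..1}"
    using H(1) unfolding L2_on_def by (simp_all only:)
  show ai: "u2 absolutely_integrable_on {0..1}"
  proof (rule measurable_bounded_by_integrable_imp_absolutely_integrable)
    show "u2 \<in> borel_measurable (lebesgue_on {0..1})"
      using m by (subst measurable_on_iff_borel_measurable[symmetric]) auto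
    show "{0..1::real} \<in> sets lebesgue" by simp
    show "(\<lambda>x. 1 + (u2 x)^2) integrable_on {0..1}"
      by (intro integrable_add sq integrable_const_ivl)
    fix x :: real
    have "0 \<le> (\<bar>u2 x\<bar> - 1) * (\<bar>u2 x\<bar> - 1)" by simp
    then have "0 \<le> \<bar>u2 x\<bar> * \<bar>u2 x\<bar> - 2 * \<bar>u2 x\<bar> + 1" by (simp add: algebra_simps)
    then have "0 \<le> u2 x * u2 x - 2 * \<bar>u2 x\<bar> + 1" by (simp add: abs_mult_self_eq)
    moreover have "0 \<le> u2 x * u2 x" by simp
    ultimately show "norm (u2 x) \<le> 1 + (u2 x)^2" by (simp add: power2_eq_square)
  qed
  have "u2 integrable_on {0..1}" using ai absolutely_integrable_on_def by blast
  then have "continuous_on {0..1} (\<lambda>x. u1 0 + integral {0..x} u2)"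
    by (intro continuous_intros indefinite_integral_continuous_1)
  then show "continuous_on {0..1} u1"
  proof (rule continuous_on_eq)
    fix x :: real assume "x \<in> {0..1}"
    then show "u1 0 + integral {0..x} u2 = u1 x" using H(2) by metis
  qed
qed

lemma ext_in: "x \<in> {0..1} \<Longrightarrow> ext u x = u x"
proof -
  assume x: "x \<in> {0..1}"
  have "\<lfloor>x / 2\<rfloor> = 0" using x by (simp add: floor_eq_iff)
  then show ?thesis using x by (simp add: ext_def Let_def)
qed

lemma ext_shift1: "x \<in> {0..1} \<Longrightarrow> ext u (x + 1) = u (1 - x)"
proof -
  assume x: "x \<in> {0..1}"
  show ?thesis
  proof (cases "x = 1")
    case True
    have "\<lfloor>(1 + 1) / 2 :: real\<rfloor> = 1" by simp
    then show ?thesis using True by (simp add: ext_def Let_def)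
  next
    case False
    have "\<lfloor>(x + 1) / 2\<rfloor> = 0" using x False by (simp add: floor_eq_iff)
    then show ?thesis using x by (auto simp: ext_def Let_def)
  qed
qed

lemma Tpow: "(T n ^^ k) v x = (-1)^k * v (x + real k / real n)"
proof (induction k arbitrary: x)
  case 0
  then show ?case by simp
next
  case (Suc k)
  have "(T n ^^ Suc k) v x = - ((T n ^^ k) v) (x + 1 / real n)" by (simp add: T_def)
  also have "\<dots> = - ((-1)^k * v (x + 1 / real n + real k / real n))" using Suc by simp
  also have "x + 1 / real n + real k / real n = x + real (Suc k) / real n"
    by (simp add: add_divide_distrib)
  finally show ?case by simp
qed

lemma Wa_iter: "W_a n v \<Longrightarrow> v (x + real k / real n) = (-1)^k * v x"
proof (induction k arbitrary: x)
  case 0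
  then show ?case by simp
next
  case (Suc k)
  have "x + real (Suc k) / real n = (x + real k / real n) + 1 / real n"
    by (simp add: add_divide_distrib)
  then have "v (x + real (Suc k) / real n) = v ((x + real k / real n) + 1 / real n)"
    by (rule arg_cong)
  also have "\<dots> = - v (x + real k / real n)"
  proof -
    have "\<forall>y. - v (y + 1 / real n) - v y = 0" using Suc.prems unfolding W_a_def T_def by simp
    then have "- v ((x + real k / real n) + 1 / real n) - v (x + real k / real n) = 0" by blast
    then show ?thesis by linarith
  qed
  finally show ?case using Suc by simp
qed

lemma telesc: "(\<Sum>k<n. (-1)^k * (a k + a (Suc k))) = a 0 - (-1)^n * (a n :: real)"
  by (induction n) (auto simp: algebra_simps)

lemma Wb_refl:
  assumes n: "n \<ge> 1" and W: "W_b n v"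
  shows "v x = (-1)^n * v (x + 1)"
proof -
  have S: "(\<Sum>k<n. (-1)^k * v (y + real k / real n)) = 0" for y
    using W unfolding W_b_def Tpow by simp
  have "(\<Sum>k<n. (-1)^k * (v (x + real k / real n) + v (x + real (Suc k) / real n)))
        = (\<Sum>k<n. (-1)^k * v (x + real k / real n)) + (\<Sum>k<n. (-1)^k * v ((x + 1 / real n) + real k / real n))"
    by (simp add: sum.distrib algebra_simps add_divide_distrib)
  also have "\<dots> = 0" using S by simp
  finally have "v (x + real 0 / real n) - (-1)^n * v (x + real n / real n) = 0"
    using telesc[where n=n and a="\<lambda>k. v (x + real k / real n)"] by simp
  then show ?thesis using n by simp
qed

lemma Wc_refl: "W_c n v \<Longrightarrow> (-1)^n * v (x + real n / real n) + v x = 0"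
  unfolding W_c_def Tpow by simp



lemma lev_refl:
  assumes X: "in_X u u1 u2" and r0: "\<forall>x\<in>{0..1}. u (1 - x) = e * u x"
  shows "\<forall>x\<in>{0..1}. u1 (1 - x) = - e * u1 x"
    and "\<exists>N. negligible N \<and> (\<forall>x\<in>{0..1} - N. u2 (1 - x) = e * u2 x)"
proof -
  note XF = X_facts[OF X]
  define c :: "nat \<Rightarrow> real" where "c j = (if j = 0 then 1 else - e)" for j
  define s :: "nat \<Rightarrow> real" where "s j = (if j = 0 then -1 else 1)" for j
  define d :: "nat \<Rightarrow> real" where "d j = (if j = 0 then 1 else 0)" for j
  have J: "finite {0::nat, 1}" by simp
  have s: "\<forall>j\<in>{0::nat,1}. s j = 1 \<or> s j = -1" by (simp add: s_def)
  have rng: "\<forall>j\<in>{0::nat,1}. \<forall>x\<in>{0..1}. s j * x + d j \<in> {0..1}" by (simp add: s_def d_def)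
  have rel0: "\<forall>x\<in>{0..1}. (\<Sum>j\<in>{0::nat,1}. c j * u (s j * x + d j)) = 0"
    using r0 by (simp add: c_def s_def d_def)
  have rel1: "\<forall>x\<in>{0..1}. (\<Sum>j\<in>{0::nat,1}. c j * s j * u1 (s j * x + d j)) = 0"
    by (rule rel_cont[OF XF(1) XF(4) J s rng rel0]) simp
  then show "\<forall>x\<in>{0..1}. u1 (1 - x) = - e * u1 x"
    by (simp add: c_def s_def d_def) (metis add.inverse_inverse equation_minus_iff minus_add_cancel mult_minus_left)
  from rel_ae[OF XF(2) XF(3) J s rng, of "\<lambda>j. c j * s j"] rel1
  obtain N where N: "negligible N"
    and r2: "\<forall>x\<in>{0..1} - N. (\<Sum>j\<in>{0::nat,1}. c j * s j * s j * u2 (s j * x + d j)) = 0"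
    by auto
  show "\<exists>N. negligible N \<and> (\<forall>x\<in>{0..1} - N. u2 (1 - x) = e * u2 x)"
  proof (intro exI conjI ballI)
    show "negligible N" by (rule N)
    fix x assume "x \<in> {0..1} - N"
    then show "u2 (1 - x) = e * u2 x" using r2 by (simp add: c_def s_def d_def)
  qed
qed

lemma rng_shift:
  assumes "j < n" "x \<in> {0..1/real n}"
  shows "x + real j / real n \<in> {0..1}"
proof -
  have n: "real n > 0" using assms by simp
  have "x + real j / real n \<le> 1 / real n + real j / real n" using assms by simp
  also have "\<dots> = real (Suc j) / real n" by (simp add: add_divide_distrib)
  also have "\<dots> \<le> 1" using assms n by (simp add: divide_le_eq_1)
  finally show ?thesis using assms by auto
qed

lemma lev_shift:
  assumes X: "in_X u u1 u2" and n: "n \<ge> 1"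
    and r0: "\<forall>t\<in>{0..1/real n}. \<forall>j<n. u (t + real j / real n) = (-1)^j * u t"
  shows "\<forall>t\<in>{0..1/real n}. \<forall>j<n. u1 (t + real j / real n) = (-1)^j * u1 t"
    and "\<exists>N. negligible N \<and> (\<forall>t\<in>{0..1/real n} - N. \<forall>j<n. u2 (t + real j / real n) = (-1)^j * u2 t)"
proof -
  note XF = X_facts[OF X]
  have pq: "0 < 1 / real n" using n by simp
  have J: "finite {0::nat, 1}" by simp
  have s: "\<forall>i\<in>{0::nat,1}. (\<lambda>_. 1::real) i = 1 \<or> (\<lambda>_. 1::real) i = -1" by simp
  define c :: "nat \<Rightarrow> nat \<Rightarrow> real" where "c j i = (if i = 0 then 1 else - ((-1)^j))" for j i
  define d :: "nat \<Rightarrow> nat \<Rightarrow> real" where "d j i = (if i = 0 then real j / real n else 0)" for j i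
  have rng: "\<forall>i\<in>{0::nat,1}. \<forall>x\<in>{0..1/real n}. 1 * x + d j i \<in> {0..1}" if j: "j < n" for j
  proof -
    have "x \<in> {0..1}" if "x \<in> {0..1/real n}" for x using rng_shift[of 0 n x] that j by simp
    then show ?thesis using rng_shift[OF j] by (auto simp: d_def)
  qed
  have rel0: "\<forall>x\<in>{0..1/real n}. (\<Sum>i\<in>{0::nat,1}. c j i * u (1 * x + d j i)) = 0" if j: "j < n" for j
    using r0 j by (simp add: c_def d_def)
  have rel1: "\<forall>x\<in>{0..1/real n}. (\<Sum>i\<in>{0::nat,1}. c j i * 1 * u1 (1 * x + d j i)) = 0" if j: "j < n" for j
    by (rule rel_cont[OF XF(1) XF(4) J s rng[OF j] rel0[OF j] pq])
  show "\<forall>t\<in>{0..1/real n}. \<forall>j<n. u1 (t + real j / real n) = (-1)^j * u1 t"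
  proof (intro ballI allI impI)
    fix t j assume "t \<in> {0..1/real n}" "j < n"
    then show "u1 (t + real j / real n) = (-1)^j * u1 t"
      using rel1[of j] by (simp add: c_def d_def)
  qed
  have "\<exists>N. negligible N \<and> (\<forall>x\<in>{0..1/real n} - N. (\<Sum>i\<in>{0::nat,1}. c j i * 1 * 1 * u2 (1 * x + d j i)) = 0)"
    if j: "j < n" for j
    by (rule rel_ae[OF XF(2) XF(3) J s rng[OF j] rel1[OF j]]) (use pq in simp)
  then have "\<forall>j\<in>{..<n}. \<exists>N. negligible N \<and> (\<forall>x\<in>{0..1/real n} - N. u2 (x + real j / real n) = (-1)^j * u2 x)"
    by (auto simp: c_def d_def)
  then obtain Nf where Nf: "\<forall>j\<in>{..<n}. negligible (Nf j) \<and> (\<forall>x\<in>{0..1/real n} - Nf j. u2 (x + real j / real n) = (-1)^j * u2 x)"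
    by (auto dest!: bchoice)
  show "\<exists>N. negligible N \<and> (\<forall>t\<in>{0..1/real n} - N. \<forall>j<n. u2 (t + real j / real n) = (-1)^j * u2 t)"
  proof (intro exI conjI ballI allI impI)
    show "negligible (\<Union>j\<in>{..<n}. Nf j)" using Nf by (intro negligible_Union) auto
    fix t j assume "t \<in> {0..1/real n} - (\<Union>j\<in>{..<n}. Nf j)" "j < n"
    then show "u2 (t + real j / real n) = (-1)^j * u2 t" using Nf by auto
  qed
qed

lemma lev_sum:
  assumes X: "in_X u u1 u2" and n: "n \<ge> 1"
    and r0: "\<forall>t\<in>{0..1/real n}. (\<Sum>j<n. (-1)^j * u (t + real j / real n)) = 0"
  shows "\<forall>t\<in>{0..1/real n}. (\<Sum>j<n. (-1)^j * u1 (t + real j / real n)) = 0"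
    and "\<exists>N. negligible N \<and> (\<forall>t\<in>{0..1/real n} - N. (\<Sum>j<n. (-1)^j * u2 (t + real j / real n)) = 0)"
proof -
  note XF = X_facts[OF X]
  have pq: "0 < 1 / real n" using n by simp
  have J: "finite {..<n}" by simp
  have s: "\<forall>i\<in>{..<n}. (\<lambda>_. 1::real) i = 1 \<or> (\<lambda>_. 1::real) i = -1" by simp
  have rng: "\<forall>i\<in>{..<n}. \<forall>x\<in>{0..1/real n}. 1 * x + real i / real n \<in> {0..1}"
    using rng_shift by auto
  have rel0: "\<forall>x\<in>{0..1/real n}. (\<Sum>i\<in>{..<n}. (-1)^i * u (1 * x + real i / real n)) = 0"
    using r0 by simp
  have rel1: "\<forall>x\<in>{0..1/real n}. (\<Sum>i\<in>{..<n}. (-1)^i * 1 * u1 (1 * x + real i / real n)) = 0"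
    by (rule rel_cont[OF XF(1) XF(4) J s rng rel0 pq])
  then show "\<forall>t\<in>{0..1/real n}. (\<Sum>j<n. (-1)^j * u1 (t + real j / real n)) = 0" by simp
  have "\<exists>N. negligible N \<and> (\<forall>x\<in>{0..1/real n} - N. (\<Sum>i\<in>{..<n}. (-1)^i * 1 * 1 * u2 (1 * x + real i / real n)) = 0)"
    by (rule rel_ae[OF XF(2) XF(3) J s rng rel1]) (use pq in simp)
  then show "\<exists>N. negligible N \<and> (\<forall>t\<in>{0..1/real n} - N. (\<Sum>j<n. (-1)^j * u2 (t + real j / real n)) = 0)"
    by simp
qed



lemma nn1: "real n / real n = 1" if "n \<ge> 1" for n :: nat using that by simp

lemma refl0:
  assumes X: "in_X_sym \<tau> n u u1 u2" and n: "n \<ge> 1"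
  shows "\<forall>x\<in>{0..1}. u (1 - x) = (if \<tau> = Sc then - ((-1)^n) else (-1)^n) * u x"
proof
  fix x :: real assume x: "x \<in> {0..1}"
  have W: "W_sym \<tau> n (ext u)" using X unfolding in_X_sym_def by simp
  have e1: "ext u (x + 1) = u (1 - x)" using ext_shift1[OF x] .
  have e0: "ext u x = u x" using ext_in[OF x] .
  have sq: "(-1::real)^n * (-1)^n = 1" by (simp add: power_mult_distrib[symmetric])
  show "u (1 - x) = (if \<tau> = Sc then - ((-1)^n) else (-1)^n) * u x"
  proof (cases \<tau>)
    case Sa
    then have "W_a n (ext u)" using W by (simp add: W_sym_def)
    from Wa_iter[OF this, of x n] have "ext u (x + 1) = (-1)^n * ext u x" using nn1[OF n] by simp
    then show ?thesis using Sa e0 e1 by simp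
  next
    case Sb
    then have "W_b n (ext u)" using W by (simp add: W_sym_def)
    from Wb_refl[OF n this, of x] have "u x = (-1)^n * u (1 - x)" using e0 e1 by simp
    then have "(-1)^n * u x = ((-1)^n * (-1)^n) * u (1 - x)" by simp
    then show ?thesis using Sb sq by simp
  next
    case Sc
    then have "W_c n (ext u)" using W by (simp add: W_sym_def)
    from Wc_refl[OF this, of x] have "(-1)^n * u (1 - x) + u x = 0" using e0 e1 nn1[OF n] by simp
    then have h: "(-1)^n * u (1 - x) = - u x" by linarith
    have "u (1 - x) = ((-1)^n * (-1)^n) * u (1 - x)" using sq by simp
    also have "\<dots> = (-1)^n * ((-1)^n * u (1 - x))" by (simp only: mult.assoc)
    also have "\<dots> = - ((-1)^n * u x)" using h by simp
    finally show ?thesis using Sc by simp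
  qed
qed

lemma refl_all:
  assumes X: "in_X_sym \<tau> n u u1 u2" and n: "n \<ge> 1"
  defines "e \<equiv> (if \<tau> = Sc then - ((-1)^n) else (-1::real)^n)"
  shows "\<forall>x\<in>{0..1}. u (1 - x) = e * u x"
    and "\<forall>x\<in>{0..1}. u1 (1 - x) = - e * u1 x"
    and "\<exists>N. negligible N \<and> (\<forall>x\<in>{0..1} - N. u2 (1 - x) = e * u2 x)"
proof -
  have X': "in_X u u1 u2" using X unfolding in_X_sym_def by simp
  show r: "\<forall>x\<in>{0..1}. u (1 - x) = e * u x" using refl0[OF X n] unfolding e_def .
  show "\<forall>x\<in>{0..1}. u1 (1 - x) = - e * u1 x" by (rule lev_refl(1)[OF X' r])
  show "\<exists>N. negligible N \<and> (\<forall>x\<in>{0..1} - N. u2 (1 - x) = e * u2 x)" by (rule lev_refl(2)[OF X' r])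
qed

lemma orth_c:
  assumes X: "in_X_sym \<tau> n u u1 u2" and Y: "in_X_sym Sc n v v1 v2" and n: "n \<ge> 1" and t: "\<tau> \<noteq> Sc"
  shows "integral {0..1} (\<lambda>x. u x * v x) = 0"
    and "integral {0..1} (\<lambda>x. u1 x * v1 x) = 0"
    and "integral {0..1} (\<lambda>x. u2 x * v2 x) = 0"
proof -
  define e :: real where "e = (-1)^n"
  have ee: "e * e = 1" "(- e) * (- e) = 1" unfolding e_def by (simp_all add: power_mult_distrib[symmetric])
  note U = refl_all[OF X n] and V = refl_all[OF Y n]
  have U0: "\<forall>x\<in>{0..1}. u (1 - x) = e * u x" and U1: "\<forall>x\<in>{0..1}. u1 (1 - x) = - e * u1 x"
    using U(1,2) t unfolding e_def by auto
  obtain Nu where Nu: "negligible Nu" "\<forall>x\<in>{0..1} - Nu. u2 (1 - x) = e * u2 x"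
    using U(3) t unfolding e_def by auto
  have V0: "\<forall>x\<in>{0..1}. v (1 - x) = - e * v x" and V1: "\<forall>x\<in>{0..1}. v1 (1 - x) = - (- e) * v1 x"
    using V(1,2) unfolding e_def by auto
  obtain Nv where Nv: "negligible Nv" "\<forall>x\<in>{0..1} - Nv. v2 (1 - x) = - e * v2 x"
    using V(3) unfolding e_def by auto
  show "integral {0..1} (\<lambda>x. u x * v x) = 0"
    by (rule orth_refl[of "{}" e]) (use ee U0 V0 in auto)
  show "integral {0..1} (\<lambda>x. u1 x * v1 x) = 0"
    by (rule orth_refl[of "{}" "- e"]) (use ee U1 V1 in auto)
  show "integral {0..1} (\<lambda>x. u2 x * v2 x) = 0"
    by (rule orth_refl[of "Nu \<union> Nv" e]) (use ee Nu Nv in auto)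
qed

lemma orth_ab:
  assumes X: "in_X_sym Sa n u u1 u2" and Y: "in_X_sym Sb n v v1 v2" and n: "n \<ge> 1"
  shows "integral {0..1} (\<lambda>x. u x * v x) = 0"
    and "integral {0..1} (\<lambda>x. u1 x * v1 x) = 0"
    and "integral {0..1} (\<lambda>x. u2 x * v2 x) = 0"
proof -
  have X': "in_X u u1 u2" and Wa: "W_a n (ext u)" using X unfolding in_X_sym_def W_sym_def by simp_all
  have Y': "in_X v v1 v2" and Wb: "W_b n (ext v)" using Y unfolding in_X_sym_def W_sym_def by simp_all
  have t01: "t \<in> {0..1}" if "t \<in> {0..1/real n}" for t using rng_shift[of 0 n t] that n by simp
  have u0: "\<forall>t\<in>{0..1/real n}. \<forall>j<n. u (t + real j / real n) = (-1)^j * u t"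
  proof (intro ballI allI impI)
    fix t j assume t: "t \<in> {0..1/real n}" and j: "j < n"
    have "ext u (t + real j / real n) = (-1)^j * ext u t" by (rule Wa_iter[OF Wa])
    then show "u (t + real j / real n) = (-1)^j * u t"
      using ext_in[OF rng_shift[OF j t]] ext_in[OF t01[OF t]] by simp
  qed
  have v0: "\<forall>t\<in>{0..1/real n}. (\<Sum>j<n. (-1)^j * v (t + real j / real n)) = 0"
  proof
    fix t assume t: "t \<in> {0..1/real n}"
    have "(\<Sum>j<n. (-1)^j * ext v (t + real j / real n)) = 0"
      using Wb unfolding W_b_def Tpow by simp
    moreover have "(\<Sum>j<n. (-1)^j * ext v (t + real j / real n)) = (\<Sum>j<n. (-1)^j * v (t + real j / real n))"
      by (rule sum.cong) (use ext_in[OF rng_shift[OF _ t]] in auto)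
    ultimately show "(\<Sum>j<n. (-1)^j * v (t + real j / real n)) = 0" by simp
  qed
  note U = lev_shift[OF X' n u0] and V = lev_sum[OF Y' n v0]
  obtain Nu where Nu: "negligible Nu" "\<forall>t\<in>{0..1/real n} - Nu. \<forall>j<n. u2 (t + real j / real n) = (-1)^j * u2 t"
    using U(2) by auto
  obtain Nv where Nv: "negligible Nv" "\<forall>t\<in>{0..1/real n} - Nv. (\<Sum>j<n. (-1)^j * v2 (t + real j / real n)) = 0"
    using V(2) by auto
  show "integral {0..1} (\<lambda>x. u x * v x) = 0"
    by (rule orth_shift[OF n, of "{}"]) (use u0 v0 in auto)
  show "integral {0..1} (\<lambda>x. u1 x * v1 x) = 0"
    by (rule orth_shift[OF n, of "{}"]) (use U(1) V(1) in auto)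
  show "integral {0..1} (\<lambda>x. u2 x * v2 x) = 0"
    by (rule orth_shift[OF n, of "Nu \<union> Nv"]) (use Nu Nv in auto)
qed

theorem lemma2p9:
  fixes n :: nat and \<beta> \<gamma> :: real and \<tau> \<sigma> :: sym
    and u u1 u2 v v1 v2 :: "real \<Rightarrow> real"
  assumes "n \<ge> 1" and "\<beta> \<ge> 0" and "\<gamma> \<ge> 0"
    and "\<tau> \<noteq> \<sigma>"
    and "in_X_sym \<tau> n u u1 u2" and "in_X_sym \<sigma> n v v1 v2"
  shows "ip \<beta> \<gamma> u u1 u2 v v1 v2 = 0"
proof -
  have comm: "integral {0..1} (\<lambda>x. f x * g x) = integral {0..1} (\<lambda>x. g x * f x)" for f g :: "real \<Rightarrow> real"
    by (simp add: mult.commute)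
  have "integral {0..1} (\<lambda>x. u x * v x) = 0 \<and> integral {0..1} (\<lambda>x. u1 x * v1 x) = 0
      \<and> integral {0..1} (\<lambda>x. u2 x * v2 x) = 0"
  proof (cases \<sigma>)
    case Sc
    then have "\<tau> \<noteq> Sc" using assms(4) by simp
    then show ?thesis using orth_c[OF assms(5) assms(6)[unfolded Sc] assms(1)] by simp
  next
    case Sa
    show ?thesis
    proof (cases \<tau>)
      case Sc
      from orth_c[OF assms(6)[unfolded Sa] assms(5)[unfolded Sc] assms(1)] show ?thesis
        by (simp add: mult.commute)
    next
      case Sb
      from orth_ab[OF assms(6)[unfolded Sa] assms(5)[unfolded Sb] assms(1)] show ?thesis
        by (simp add: mult.commute)
    qed (use Sa assms(4) in simp)
  next
    case Sb
    show ?thesis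
    proof (cases \<tau>)
      case Sc
      from orth_c[OF assms(6)[unfolded Sb] assms(5)[unfolded Sc] assms(1)] show ?thesis
        by (simp add: mult.commute)
    next
      case Sa
      from orth_ab[OF assms(5)[unfolded Sa] assms(6)[unfolded Sb] assms(1)] show ?thesis
        by simp
    qed (use Sb assms(4) in simp)
  qed
  then show ?thesis unfolding ip_def by simp
qed

end
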